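(* The sequence $\{E_n(x)\}_{n\ge 0}$ of Carlitz $\mathbf{F}_q$-linear polynomials is an orthonormal basis of $LC(O,K)$ if and only if the sequence $\{\mathcal{D}_n\}_{n\ge 0}$ of hyper-differential operators is an orthonormal basis of $LC(O,K)$.
   Context: Let $q$ be a prime power, $\mathbf{F}_q$ the field with $q$ elements, $K=\mathbf{F}_q((T))$, $O=\mathbf{F}_q[[T]]$. For nonzero $x=\sum_i\alpha_iT^i\in K$ let $v(x)$ be the least $i$ with $\alpha_i\neq 0$ and $|x|=q^{-v(x)}$, $|0|=0$. $C(O,K)$ is the $K$-Banach space of continuous functions $O\to K$ with the sup-norm $\|f\|=\max_{t\in O}|f(t)|$, and $LC(O,K)$ is its subspace of continuous $\mathbf{F}_q$-linear functions. A sequence $(f_n)_{n\ge0}$ in such a Banach space $E$ is an orthonormal basis of $E$ if every $f\in E$ can be written uniquely as $f=\sum_{n\ge0}a_nf_n$ with $a_n\in K$, $a_n\to0$, and then $\|f\|=\max_n|a_n|$. For $n\ge1$ put $[n]=T^{q^n}-T$, $F_0=1$, $F_n=[n][n-1]^q\cdots[1]^{q^{n-1}}$, and $e_n(x)=\prod_{m\in\mathbf{F}_q[T],\ \deg m<n}(x-m)$ (product over all polynomials of degree $<n$, including $0$). Set $E_0(x)=x$ and $E_n(x)=e_n(x)/F_n$ for $n\ge1$ (Carlitz $\mathbf{F}_q$-linear polynomials). The hyper-differential operators (Hasse derivatives) $\mathcal{D}_n$, $n\ge0$, are defined by $\mathcal{D}_n(\sum_i a_iT^i)=\sum_i\binom{i}{n}a_iT^{i-n}$,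 with binomial coefficients read in $\mathbf{F}_q$; they are continuous $\mathbf{F}_q$-linear maps $O\to O$. *)

theory Defs
  imports "HOL-Analysis.Analysis" "HOL-Computational_Algebra.Computational_Algebra"
begin

text \<open>K = F_q((T)) is modelled by the type 'a fls of formal Laurent series over a finite
field 'a (so q = CARD('a) is automatically a prime power).\<close>

definition lnorm :: "'a::{field,finite} fls \<Rightarrow> real" where
  "lnorm x = (if x = 0 then 0 else real CARD('a) powr (- real_of_int (fls_subdegree x)))"

text \<open>The valuation ring O = F_q[[T]].\<close>
definition Oset :: "'a::{field,finite} fls set" where
  "Oset = {x. x = 0 \<or> 0 \<le> fls_subdegree x}"

definition supnorm :: "('a::{field,finite} fls \<Rightarrow> 'a fls) \<Rightarrow> real" where
  "supnorm f = (SUP t\<in>Oset. lnorm (f t))"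

definition cont_on_O :: "('a::{field,finite} fls \<Rightarrow> 'a fls) \<Rightarrow> bool" where
  "cont_on_O f \<longleftrightarrow> (\<forall>t\<in>Oset. \<forall>e>0. \<exists>d>0. \<forall>s\<in>Oset.
       lnorm (s - t) < d \<longrightarrow> lnorm (f s - f t) < e)"

definition CO :: "('a::{field,finite} fls \<Rightarrow> 'a fls) set" where
  "CO = {f. cont_on_O f}"

definition Fq_linear_on_O :: "('a::{field,finite} fls \<Rightarrow> 'a fls) \<Rightarrow> bool" where
  "Fq_linear_on_O f \<longleftrightarrow> (\<forall>s\<in>Oset. \<forall>t\<in>Oset. f (s + t) = f s + f t) \<and>
     (\<forall>(c::'a) s. s \<in> Oset \<longrightarrow> f (fls_const c * s) = fls_const c * f s)"

definition LC :: "('a::{field,finite} fls \<Rightarrow> 'a fls) set" where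
  "LC = {f. cont_on_O f \<and> Fq_linear_on_O f}"

text \<open>Orthonormal basis of a subspace E of C(O,K) (functions are compared on O only).\<close>
definition represents ::
  "(nat \<Rightarrow> 'a::{field,finite} fls) \<Rightarrow> (nat \<Rightarrow> 'a fls \<Rightarrow> 'a fls) \<Rightarrow> ('a fls \<Rightarrow> 'a fls) \<Rightarrow> bool" where
  "represents a fs f \<longleftrightarrow>
     (\<lambda>N. supnorm (\<lambda>t. f t - (\<Sum>n<N. a n * fs n t))) \<longlonglongrightarrow> 0"

definition null_seq :: "(nat \<Rightarrow> 'a::{field,finite} fls) \<Rightarrow> bool" where
  "null_seq a \<longleftrightarrow> (\<lambda>n. lnorm (a n)) \<longlonglongrightarrow> 0"

definition orthonormal_basis ::
  "('a::{field,finite} fls \<Rightarrow> 'a fls) set \<Rightarrow> (nat \<Rightarrow> 'a fls \<Rightarrow> 'a fls) \<Rightarrow> bool" where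
  "orthonormal_basis E fs \<longleftrightarrow> (\<forall>n. fs n \<in> E) \<and>
     (\<forall>f\<in>E. (\<exists>!a. null_seq a \<and> represents a fs f) \<and>
            (\<forall>a. null_seq a \<and> represents a fs f \<longrightarrow> supnorm f = (SUP n. lnorm (a n))))"

definition poly_to_fls :: "'a::{field,finite} poly \<Rightarrow> 'a fls" where
  "poly_to_fls p = fps_to_fls (fps_of_poly p)"

definition brk :: "nat \<Rightarrow> 'a::{field,finite} fls" where
  "brk n = fls_X ^ (CARD('a) ^ n) - fls_X"

definition carF :: "nat \<Rightarrow> 'a::{field,finite} fls" where
  "carF n = (\<Prod>i\<in>{1..n}. brk i ^ (CARD('a) ^ (n - i)))"

definition car_e :: "nat \<Rightarrow> 'a::{field,finite} fls \<Rightarrow> 'a fls" where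
  "car_e n x = (\<Prod>m\<in>{m::'a poly. degree m < n}. x - poly_to_fls m)"

definition carlitzE :: "nat \<Rightarrow> 'a::{field,finite} fls \<Rightarrow> 'a fls" where
  "carlitzE n x = (if n = 0 then x else car_e n x / carF n)"

definition hasse :: "nat \<Rightarrow> 'a::{field,finite} fls \<Rightarrow> 'a fls" where
  "hasse n x = Abs_fls (\<lambda>k. if k + int n < 0 then 0
       else of_nat (nat (k + int n) choose n) * fls_nth x (k + int n))"

end

theory Submission
  imports Defs
begin

lemma card_ge2: "CARD('a::{field,finite}) \<ge> 2"
proof -
  have "card {0::'a, 1} \<le> CARD('a)" by (rule card_mono) auto
  thus ?thesis by simp
qed

lemma q_gt1: "real CARD('a::{field,finite}) > 1"
  using card_ge2[where 'a='a] by linarith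

lemma lnorm_nz: "x \<noteq> 0 \<Longrightarrow> lnorm (x::'a::{field,finite} fls) = real CARD('a) powr (- real_of_int (fls_subdegree x))"
  by (simp add: lnorm_def)

lemma lnorm_nonneg [simp]: "lnorm x \<ge> 0"
  by (simp add: lnorm_def)

lemma lnorm_0 [simp]: "lnorm 0 = 0"
  by (simp add: lnorm_def)

lemma lnorm_eq0_iff [simp]: "lnorm (x::'a::{field,finite} fls) = 0 \<longleftrightarrow> x = 0"
  using q_gt1[where 'a='a] by (simp add: lnorm_def)

lemma lnorm_pos: "(x::'a::{field,finite} fls) \<noteq> 0 \<Longrightarrow> lnorm x > 0"
  using lnorm_nonneg[of x] lnorm_eq0_iff[of x] by linarith

lemma lnorm_mult: "lnorm ((x::'a::{field,finite} fls) * y) = lnorm x * lnorm y"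
proof (cases "x = 0 \<or> y = 0")
  case True thus ?thesis by auto
next
  case False
  hence "x * y \<noteq> 0" by simp
  thus ?thesis using False q_gt1[where 'a='a]
    by (simp add: lnorm_def powr_add[symmetric] algebra_simps)
qed

lemma lnorm_one [simp]: "lnorm (1::'a::{field,finite} fls) = 1"
  by (simp add: lnorm_def)

lemma lnorm_uminus [simp]: "lnorm (- (x::'a::{field,finite} fls)) = lnorm x"
  by (simp add: lnorm_def)

lemma lnorm_minus_commute: "lnorm ((x::'a::{field,finite} fls) - y) = lnorm (y - x)"
  by (metis lnorm_uminus minus_diff_eq)

lemma lnorm_add_le: "lnorm ((x::'a::{field,finite} fls) + y) \<le> max (lnorm x) (lnorm y)"
proof (cases "x = 0 \<or> y = 0 \<or> x + y = 0")
  case True thus ?thesis by (auto simp: le_max_iff_disj)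
next
  case False
  hence ne: "x \<noteq> 0" "y \<noteq> 0" "x + y \<noteq> 0" by auto
  have "fls_subdegree (x + y) \<ge> min (fls_subdegree x) (fls_subdegree y)"
    using fls_plus_subdegree[OF ne(3)] .
  hence "fls_subdegree (x + y) \<ge> fls_subdegree x \<or> fls_subdegree (x + y) \<ge> fls_subdegree y"
    by linarith
  thus ?thesis using ne q_gt1[where 'a='a]
    by (auto simp: lnorm_def intro: max.coboundedI1 max.coboundedI2)
qed

lemma lnorm_diff_le: "lnorm ((x::'a::{field,finite} fls) - y) \<le> max (lnorm x) (lnorm y)"
  using lnorm_add_le[of x "-y"] by simp

lemma lnorm_add_leI: "lnorm (x::'a::{field,finite} fls) \<le> B \<Longrightarrow> lnorm y \<le> B \<Longrightarrow> lnorm (x + y) \<le> B"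
  using lnorm_add_le[of x y] by linarith

lemma lnorm_diff_leI: "lnorm (x::'a::{field,finite} fls) \<le> B \<Longrightarrow> lnorm y \<le> B \<Longrightarrow> lnorm (x - y) \<le> B"
  using lnorm_diff_le[of x y] by linarith

lemma lnorm_sum_le:
  assumes "\<And>i. i \<in> A \<Longrightarrow> lnorm (f i :: 'a::{field,finite} fls) \<le> B" "0 \<le> B"
  shows "lnorm (sum f A) \<le> B"
  using assms
proof (induction A rule: infinite_finite_induct)
  case (insert x F)
  thus ?case by (auto intro!: lnorm_add_leI)
qed auto

lemma lnorm_prod: "lnorm (prod (f :: _ \<Rightarrow> 'a::{field,finite} fls) A) = (\<Prod>i\<in>A. lnorm (f i))"
  by (induction A rule: infinite_finite_induct) (auto simp: lnorm_mult)

lemma lnorm_const: "lnorm (fls_const (c::'a::{field,finite})) = (if c = 0 then 0 else 1)"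
  by (simp add: lnorm_def)

lemma lnorm_const_le1: "lnorm (fls_const (c::'a::{field,finite})) \<le> 1"
  by (simp add: lnorm_const)

lemma lnorm_X_pow: "lnorm (fls_X ^ i :: 'a::{field,finite} fls) = 1 / real CARD('a) ^ i"
  using q_gt1[where 'a='a]
  by (simp add: lnorm_def powr_minus powr_realpow divide_inverse)

lemma lnorm_inverse: "lnorm (inverse (x::'a::{field,finite} fls)) = 1 / lnorm x"
proof (cases "x = 0")
  case False
  have "lnorm (x * inverse x) = 1" using False by simp
  hence "lnorm x * lnorm (inverse x) = 1" by (simp add: lnorm_mult)
  moreover have "lnorm x \<noteq> 0" using False by simp
  ultimately show ?thesis by (simp add: eq_divide_eq mult.commute)
qed simp

lemma lnorm_divide: "lnorm ((x::'a::{field,finite} fls) / y) = lnorm x / lnorm y"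
  by (simp add: divide_inverse lnorm_mult lnorm_inverse)

lemma lnorm_le_pow_iff:
  "lnorm (x::'a::{field,finite} fls) \<le> real CARD('a) powr (- real_of_int k) \<longleftrightarrow> x = 0 \<or> k \<le> fls_subdegree x"
  using q_gt1[where 'a='a] by (auto simp: lnorm_def)

lemma lnorm_lt_pow_iff:
  "lnorm (x::'a::{field,finite} fls) < real CARD('a) powr (- real_of_int k) \<longleftrightarrow> x = 0 \<or> k < fls_subdegree x"
  using q_gt1[where 'a='a] by (auto simp: lnorm_def)

lemma Oset_iff_lnorm: "(x::'a::{field,finite} fls) \<in> Oset \<longleftrightarrow> lnorm x \<le> 1"
  using lnorm_le_pow_iff[of x 0] by (simp add: Oset_def)

lemma Oset_add: "x \<in> Oset \<Longrightarrow> y \<in> Oset \<Longrightarrow> (x::'a::{field,finite} fls) + y \<in> Oset"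
  by (simp add: Oset_iff_lnorm lnorm_add_leI)

lemma Oset_diff: "x \<in> Oset \<Longrightarrow> y \<in> Oset \<Longrightarrow> (x::'a::{field,finite} fls) - y \<in> Oset"
  by (simp add: Oset_iff_lnorm lnorm_diff_leI)

lemma Oset_mult: "x \<in> Oset \<Longrightarrow> y \<in> Oset \<Longrightarrow> (x::'a::{field,finite} fls) * y \<in> Oset"
  by (simp add: Oset_iff_lnorm lnorm_mult mult_le_one)

lemma Oset_0 [simp]: "0 \<in> Oset" by (simp add: Oset_def)

lemma Oset_const [simp]: "fls_const c \<in> Oset"
  by (simp add: Oset_def)

lemma Oset_X_pow [simp]: "(fls_X ^ i :: 'a::{field,finite} fls) \<in> Oset"
  by (simp add: Oset_def)

lemma Oset_sum: "(\<And>i. i \<in> A \<Longrightarrow> f i \<in> Oset) \<Longrightarrow> sum (f :: _ \<Rightarrow> 'a::{field,finite} fls) A \<in> Oset"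
  by (induction A rule: infinite_finite_induct) (auto intro: Oset_add)

lemma Oset_nonempty: "Oset \<noteq> {}" using Oset_0 by blast

lemma pow_small: "\<delta> > 0 \<Longrightarrow> \<exists>M. \<forall>n\<ge>M. 1 / real CARD('a::{field,finite}) ^ n < \<delta>"
proof -
  assume d: "\<delta> > 0"
  have "(\<lambda>n. inverse (real CARD('a) ^ n)) \<longlonglongrightarrow> 0"
    by (rule LIMSEQ_inverse_realpow_zero[OF q_gt1])
  hence "eventually (\<lambda>n. inverse (real CARD('a) ^ n) < \<delta>) sequentially"
    using d by (rule order_tendstoD(2))
  thus ?thesis by (auto simp: eventually_sequentially divide_inverse)
qed

lemma LC_cont: "f \<in> LC \<Longrightarrow> cont_on_O f" by (simp add: LC_def)
lemma LC_add: "f \<in> LC \<Longrightarrow> s \<in> Oset \<Longrightarrow> t \<in> Oset \<Longrightarrow> f (s + t) = f s + f t"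
  by (simp add: LC_def Fq_linear_on_O_def)
lemma LC_smul: "f \<in> LC \<Longrightarrow> s \<in> Oset \<Longrightarrow> f (fls_const c * s) = fls_const c * f s"
  by (simp add: LC_def Fq_linear_on_O_def)
lemma LC_0: "(f :: 'a::{field,finite} fls \<Rightarrow> 'a fls) \<in> LC \<Longrightarrow> f 0 = 0"
  using LC_add[of f 0 0] by (metis Oset_0 add_0 add_cancel_left_right)

definition trunc :: "nat \<Rightarrow> 'a::{field,finite} fls \<Rightarrow> 'a fls" where
  "trunc M t = (\<Sum>i<M. fls_const (fls_nth t (int i)) * fls_X ^ i)"

lemma trunc_Oset: "trunc M t \<in> Oset"
  unfolding trunc_def by (intro Oset_sum Oset_mult) auto

lemma LC_trunc: "f \<in> LC \<Longrightarrow> f (trunc M t) = (\<Sum>i<M. fls_const (fls_nth t (int i)) * f (fls_X ^ i))"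
proof (induction M)
  case 0 thus ?case by (simp add: trunc_def LC_0)
next
  case (Suc M)
  have "trunc (Suc M) t = trunc M t + fls_const (fls_nth t (int M)) * fls_X ^ M"
    by (simp add: trunc_def)
  hence "f (trunc (Suc M) t) = f (trunc M t) + f (fls_const (fls_nth t (int M)) * fls_X ^ M)"
    using Suc.prems by (simp add: LC_add trunc_Oset Oset_mult)
  also have "\<dots> = (\<Sum>i<Suc M. fls_const (fls_nth t (int i)) * f (fls_X ^ i))"
    using Suc by (simp add: LC_smul)
  finally show ?case .
qed

lemma trunc_approx:
  assumes "(t::'a::{field,finite} fls) \<in> Oset"
  shows "lnorm (t - trunc M t) \<le> 1 / real CARD('a) ^ M"
proof -
  have nth: "fls_nth (t - trunc M t) k = 0" if "k < int M" for k
  proof (cases "k < 0")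
    case True
    have "t = 0 \<or> 0 \<le> fls_subdegree t" using assms by (simp add: Oset_def)
    hence "fls_nth t k = 0" using True by (metis fls_eq0_below_subdegree fls_nonzeroI order_less_le_trans)
    moreover have "fls_nth (trunc M t) k = 0" using True
      by (simp add: trunc_def fls_nth_sum)
    ultimately show ?thesis by simp
  next
    case False
    define j where "j = nat k"
    have j: "k = int j" "j < M" using False that by (auto simp: j_def)
    have "fls_nth (trunc M t) k = (\<Sum>i<M. fls_nth t (int i) * (if j = i then 1 else 0))"
      by (simp add: trunc_def fls_nth_sum j)
    also have "\<dots> = (\<Sum>i<M. (if i = j then fls_nth t (int j) else 0))"
      by (intro sum.cong) auto
    also have "\<dots> = fls_nth t k" using j by simp
    finally show ?thesis by simp
  qed
  have "t - trunc M t = 0 \<or> int M \<le> fls_subdegree (t - trunc M t)"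
    using nth fls_subdegree_geI[of "t - trunc M t" "int M"] by blast
  hence "lnorm (t - trunc M t) \<le> real CARD('a) powr (- real_of_int (int M))"
    using lnorm_le_pow_iff by blast
  also have "\<dots> = 1 / real CARD('a) ^ M"
    using q_gt1[where 'a='a] by (simp add: powr_minus powr_realpow divide_inverse)
  finally show ?thesis .
qed

lemma LC_bound:
  assumes f: "(f :: 'a::{field,finite} fls \<Rightarrow> 'a fls) \<in> LC" and t: "t \<in> Oset"
    and S: "\<And>i. lnorm (f (fls_X ^ i)) \<le> S" "0 \<le> S"
  shows "lnorm (f t) \<le> S"
proof (rule ccontr)
  assume "\<not> lnorm (f t) \<le> S"
  hence gt: "lnorm (f t) > S" by simp
  hence "lnorm (f t) > 0" using S by linarith
  then obtain d where d: "d > 0" "\<And>s. s \<in> Oset \<Longrightarrow> lnorm (s - t) < d \<Longrightarrow> lnorm (f s - f t) < lnorm (f t)"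
    using LC_cont[OF f] t unfolding cont_on_O_def by blast
  obtain M where M: "1 / real CARD('a) ^ M < d" using pow_small[OF d(1)] by blast
  have "lnorm (trunc M t - t) < d"
    using trunc_approx[OF t, of M] M by (simp add: lnorm_minus_commute)
  hence 1: "lnorm (f (trunc M t) - f t) < lnorm (f t)" using d(2) trunc_Oset by blast
  have 2: "lnorm (f (trunc M t)) \<le> S"
    unfolding LC_trunc[OF f] using S
    by (intro lnorm_sum_le) (auto simp: lnorm_mult lnorm_const intro: mult_le_one order.trans[OF _ S(1)])
  have "f t = f (trunc M t) - (f (trunc M t) - f t)" by simp
  hence "lnorm (f t) \<le> max (lnorm (f (trunc M t))) (lnorm (f (trunc M t) - f t))"
    by (metis lnorm_diff_le)
  thus False using 1 2 gt by linarith
qed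

lemma LC_null:
  assumes f: "(f :: 'a::{field,finite} fls \<Rightarrow> 'a fls) \<in> LC"
  shows "(\<lambda>i. lnorm (f (fls_X ^ i))) \<longlonglongrightarrow> 0"
proof (rule LIMSEQ_I)
  fix r :: real assume r: "r > 0"
  obtain d where d: "d > 0" "\<And>s. s \<in> Oset \<Longrightarrow> lnorm (s - 0) < d \<Longrightarrow> lnorm (f s - f 0) < r"
    using LC_cont[OF f] r unfolding cont_on_O_def by (metis Oset_0)
  obtain M where M: "\<forall>n\<ge>M. 1 / real CARD('a) ^ n < d" using pow_small[OF d(1)] by blast
  show "\<exists>no. \<forall>n\<ge>no. norm (lnorm (f (fls_X ^ n)) - 0) < r"
    using M d(2) by (intro exI[of _ M]) (auto simp: lnorm_X_pow LC_0[OF f])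
qed

lemma null_bdd: "(g :: nat \<Rightarrow> real) \<longlonglongrightarrow> 0 \<Longrightarrow> bdd_above (range g)"
  by (intro Bseq_bdd_above convergent_imp_Bseq convergentI)

lemma LC_supnorm:
  assumes f: "(f :: 'a::{field,finite} fls \<Rightarrow> 'a fls) \<in> LC"
  shows "supnorm f = (SUP i. lnorm (f (fls_X ^ i)))"
proof -
  let ?S = "SUP i. lnorm (f (fls_X ^ i))"
  have bdd: "bdd_above (range (\<lambda>i. lnorm (f (fls_X ^ i))))" by (rule null_bdd[OF LC_null[OF f]])
  have le: "lnorm (f (fls_X ^ i)) \<le> ?S" for i by (rule cSUP_upper[OF _ bdd]) auto
  have S0: "0 \<le> ?S" using le[of 0] lnorm_nonneg[of "f (fls_X ^ 0)"] by linarith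
  have b: "lnorm (f t) \<le> ?S" if "t \<in> Oset" for t using LC_bound[OF f that le S0] .
  have bddO: "bdd_above ((\<lambda>t. lnorm (f t)) ` Oset)" by (rule bdd_aboveI2[where M="?S"]) (rule b)
  show ?thesis unfolding supnorm_def
  proof (rule antisym)
    show "(SUP t\<in>Oset. lnorm (f t)) \<le> ?S" by (rule cSUP_least[OF Oset_nonempty b])
    show "?S \<le> (SUP t\<in>Oset. lnorm (f t))"
      by (rule cSUP_least) (auto intro!: cSUP_upper[OF _ bddO])
  qed
qed

lemma cont_on_O_const0: "cont_on_O (\<lambda>t. 0)"
  by (auto simp: cont_on_O_def)

lemma LC_zero: "(\<lambda>t. 0) \<in> LC"
  by (simp add: LC_def cont_on_O_const0 Fq_linear_on_O_def)

lemma LC_diff: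
  fixes f g :: "'a::{field,finite} fls \<Rightarrow> 'a fls"
  assumes f: "f \<in> LC" and g: "g \<in> LC"
  shows "(\<lambda>t. f t - g t) \<in> LC"
proof -
  have "cont_on_O (\<lambda>t. f t - g t)" unfolding cont_on_O_def
  proof (intro ballI allI impI)
    fix t :: "'a fls" and e :: real assume t: "t \<in> Oset" and e: "e > 0"
    obtain d1 where d1: "d1 > 0" "\<forall>s\<in>(Oset::'a fls set). lnorm (s - t) < d1 \<longrightarrow> lnorm (f s - f t) < e"
      using LC_cont[OF f] t e unfolding cont_on_O_def by blast
    obtain d2 where d2: "d2 > 0" "\<forall>s\<in>(Oset::'a fls set). lnorm (s - t) < d2 \<longrightarrow> lnorm (g s - g t) < e"
      using LC_cont[OF g] t e unfolding cont_on_O_def by blast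
    show "\<exists>d>0. \<forall>s\<in>(Oset::'a fls set). lnorm (s - t) < d \<longrightarrow> lnorm (f s - g s - (f t - g t)) < e"
    proof (intro exI[of _ "min d1 d2"] conjI ballI impI)
      fix s assume s: "s \<in> Oset" "lnorm (s - t) < min d1 d2"
      have "f s - g s - (f t - g t) = (f s - f t) - (g s - g t)" by simp
      hence "lnorm (f s - g s - (f t - g t)) \<le> max (lnorm (f s - f t)) (lnorm (g s - g t))"
        by (metis lnorm_diff_le)
      moreover have "lnorm (f s - f t) < e" using d1(2) s by auto
      moreover have "lnorm (g s - g t) < e" using d2(2) s by auto
      ultimately show "lnorm (f s - g s - (f t - g t)) < e" by linarith
    qed (use d1 d2 in auto)
  qed
  moreover have "Fq_linear_on_O (\<lambda>t. f t - g t)"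
    unfolding Fq_linear_on_O_def
  proof (intro conjI ballI allI impI)
    fix s t :: "'a fls" assume s: "s \<in> Oset" and t: "t \<in> Oset"
    show "f (s + t) - g (s + t) = f s - g s + (f t - g t)"
      using LC_add[OF f s t] LC_add[OF g s t] by (simp add: algebra_simps)
  next
    fix c :: 'a and s :: "'a fls" assume s: "s \<in> Oset"
    show "f (fls_const c * s) - g (fls_const c * s) = fls_const c * (f s - g s)"
      using LC_smul[OF f s, of c] LC_smul[OF g s, of c] by (simp add: algebra_simps)
  qed
  ultimately show ?thesis by (simp add: LC_def)
qed

lemma LC_scale:
  fixes g :: "'a::{field,finite} fls \<Rightarrow> 'a fls"
  assumes g: "g \<in> LC"
  shows "(\<lambda>t. c * g t) \<in> LC"
proof (cases "c = 0")
  case True thus ?thesis using LC_zero by simp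
next
  case False
  have "cont_on_O (\<lambda>t. c * g t)" unfolding cont_on_O_def
  proof (intro ballI allI impI)
    fix t :: "'a fls" and e :: real assume t: "t \<in> Oset" and e: "e > 0"
    have "e / lnorm c > 0" using e lnorm_pos[OF False] by simp
    then obtain d where d: "d > 0" "\<forall>s\<in>(Oset::'a fls set). lnorm (s - t) < d \<longrightarrow> lnorm (g s - g t) < e / lnorm c"
      using LC_cont[OF g] t unfolding cont_on_O_def by blast
    show "\<exists>d>0. \<forall>s\<in>(Oset::'a fls set). lnorm (s - t) < d \<longrightarrow> lnorm (c * g s - c * g t) < e"
    proof (intro exI[of _ d] conjI ballI impI)
      fix s assume s: "s \<in> Oset" "lnorm (s - t) < d"
      have "lnorm (c * g s - c * g t) = lnorm c * lnorm (g s - g t)"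
        by (simp add: lnorm_mult[symmetric] algebra_simps)
      also have "\<dots> < lnorm c * (e / lnorm c)"
        using d s lnorm_pos[OF False] by (intro mult_strict_left_mono) auto
      also have "\<dots> = e" using False by simp
      finally show "lnorm (c * g s - c * g t) < e" .
    qed (use d in auto)
  qed
  moreover have "Fq_linear_on_O (\<lambda>t. c * g t)"
    unfolding Fq_linear_on_O_def
  proof (intro conjI ballI allI impI)
    fix s t :: "'a fls" assume s: "s \<in> Oset" and t: "t \<in> Oset"
    show "c * g (s + t) = c * g s + c * g t"
      using LC_add[OF g s t] by (simp add: algebra_simps)
  next
    fix d :: 'a and s :: "'a fls" assume s: "s \<in> Oset"
    show "c * g (fls_const d * s) = fls_const d * (c * g s)"
      using LC_smul[OF g s, of d] by (simp add: algebra_simps)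
  qed
  ultimately show ?thesis by (simp add: LC_def)
qed

lemma LC_add_fun:
  fixes f g :: "'a::{field,finite} fls \<Rightarrow> 'a fls"
  assumes f: "f \<in> LC" and g: "g \<in> LC"
  shows "(\<lambda>t. f t + g t) \<in> LC"
proof -
  have "(\<lambda>t. (-1) * g t) \<in> LC" by (rule LC_scale[OF g])
  from LC_diff[OF f this] show ?thesis by simp
qed

lemma LC_sum:
  assumes "\<And>n. n \<in> A \<Longrightarrow> g n \<in> LC"
  shows "(\<lambda>t. \<Sum>n\<in>A. g n t :: 'a::{field,finite} fls) \<in> LC"
  using assms
proof (induction A rule: infinite_finite_induct)
  case (infinite A) thus ?case using LC_zero by simp
next
  case empty thus ?case using LC_zero by simp
next
  case (insert x F)
  have "(\<lambda>t. g x t + (\<Sum>n\<in>F. g n t)) \<in> LC"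
    using insert by (intro LC_add_fun) auto
  thus ?case using insert by simp
qed

lemma LC_supnorm_le:
  assumes "g \<in> LC" "\<And>i. lnorm (g (fls_X ^ i :: 'a::{field,finite} fls)) \<le> C"
  shows "supnorm g \<le> C"
  unfolding LC_supnorm[OF assms(1)] by (rule cSUP_least) (use assms in auto)

lemma LC_supnorm_ge:
  assumes "g \<in> LC"
  shows "lnorm (g (fls_X ^ i :: 'a::{field,finite} fls)) \<le> supnorm g"
  unfolding LC_supnorm[OF assms(1)] by (rule cSUP_upper[OF _ null_bdd[OF LC_null[OF assms]]]) auto

lemma LC_supnorm_nonneg:
  assumes "(g :: 'a::{field,finite} fls \<Rightarrow> 'a fls) \<in> LC"
  shows "0 \<le> supnorm g"
  using LC_supnorm_ge[OF assms, of 0] lnorm_nonneg[of "g (fls_X ^ 0)"] by linarith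

fun solve :: "(nat \<Rightarrow> 'a::{field,finite} fls) \<Rightarrow> (nat \<Rightarrow> nat \<Rightarrow> 'a fls) \<Rightarrow> nat \<Rightarrow> 'a fls" where
  "solve b M i = (b i - (\<Sum>n<i. solve b M n * M n i)) / M i i"

declare solve.simps [simp del]

locale tri =
  fixes h :: "nat \<Rightarrow> 'a::{field,finite} fls \<Rightarrow> 'a fls"
  assumes H1: "\<And>n. h n \<in> LC"
    and H2: "\<And>n i. i < n \<Longrightarrow> h n (fls_X ^ i) = 0"
    and H3: "\<And>n. lnorm (h n (fls_X ^ n)) = 1"
    and H4: "\<And>n i. lnorm (h n (fls_X ^ i)) \<le> 1 / real CARD('a) ^ (i - n)"
begin

abbreviation "M n i \<equiv> h n (fls_X ^ i)"

lemma M_le1: "lnorm (M n i) \<le> 1"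
proof -
  have "1 \<le> real CARD('a) ^ (i - n)" using q_gt1[where 'a='a] by (simp add: one_le_power)
  hence "1 / real CARD('a) ^ (i - n) \<le> 1" by simp
  thus ?thesis using H4[of n i] by linarith
qed

lemma M_diag_nz: "M i i \<noteq> 0"
  using H3[of i] by auto

lemma tri_sum:
  assumes "Suc i \<le> N"
  shows "(\<Sum>n<N. a n * M n i) = (\<Sum>n<Suc i. a n * M n i)"
  by (rule sum.mono_neutral_right) (use assms H2 in auto)

lemma sum_Suc_split: "(\<Sum>n<Suc i. a n * M n i) = a i * M i i + (\<Sum>n<i. a n * M n i)"
  by simp

definition eqn :: "('a fls \<Rightarrow> 'a fls) \<Rightarrow> (nat \<Rightarrow> 'a fls) \<Rightarrow> bool" where
  "eqn f a \<longleftrightarrow> (\<forall>i. f (fls_X ^ i) = (\<Sum>n<Suc i. a n * M n i))"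

lemma gN_LC: "f \<in> LC \<Longrightarrow> (\<lambda>t. f t - (\<Sum>n<N. a n * h n t)) \<in> LC"
  by (intro LC_diff LC_sum LC_scale H1)

lemma represents_eqn:
  assumes f: "f \<in> LC" and r: "represents a h f"
  shows "eqn f a"
  unfolding eqn_def
proof
  fix i
  let ?c = "f (fls_X ^ i) - (\<Sum>n<Suc i. a n * M n i)"
  have "lnorm ?c \<le> 0"
  proof (rule LIMSEQ_le_const)
    show "(\<lambda>N. supnorm (\<lambda>t. f t - (\<Sum>n<N. a n * h n t))) \<longlonglongrightarrow> 0"
      using r by (simp add: represents_def)
    show "\<exists>N0. \<forall>N\<ge>N0. lnorm ?c \<le> supnorm (\<lambda>t. f t - (\<Sum>n<N. a n * h n t))"
    proof (intro exI[of _ "Suc i"] allI impI)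
      fix N assume N: "Suc i \<le> N"
      have eq: "?c = f (fls_X ^ i) - (\<Sum>n<N. a n * M n i)" using tri_sum[OF N, where a=a] by (simp only:)
      have "lnorm (f (fls_X ^ i) - (\<Sum>n<N. a n * M n i)) \<le> supnorm (\<lambda>t. f t - (\<Sum>n<N. a n * h n t))"
        using LC_supnorm_ge[OF gN_LC[OF f, where N=N and a=a], where i=i] by simp
      thus "lnorm ?c \<le> supnorm (\<lambda>t. f t - (\<Sum>n<N. a n * h n t))" by (simp only: eq)
    qed
  qed
  hence "lnorm ?c = 0" using lnorm_nonneg[of ?c] by linarith
  hence "?c = 0" by (simp only: lnorm_eq0_iff)
  thus "f (fls_X ^ i) = (\<Sum>n<Suc i. a n * M n i)" by (simp only: right_minus_eq)
qed

lemma eqn_unique: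
  assumes "eqn f a" "eqn f a'"
  shows "a = a'"
proof
  fix i show "a i = a' i"
  proof (induction i rule: less_induct)
    case (less i)
    have "(\<Sum>n<i. a n * M n i) = (\<Sum>n<i. a' n * M n i)"
      using less by (intro sum.cong) auto
    moreover have "(\<Sum>n<Suc i. a n * M n i) = (\<Sum>n<Suc i. a' n * M n i)"
      using assms by (simp add: eqn_def)
    ultimately have "a i * M i i = a' i * M i i" by simp
    thus ?case using M_diag_nz by simp
  qed
qed

lemma eqn_solve: "eqn f (solve (\<lambda>i. f (fls_X ^ i)) M)"
  unfolding eqn_def
proof
  fix i
  have "solve (\<lambda>i. f (fls_X ^ i)) M i * M i i = f (fls_X ^ i) - (\<Sum>n<i. solve (\<lambda>i. f (fls_X ^ i)) M n * M n i)"
    using M_diag_nz by (subst solve.simps) simp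
  thus "f (fls_X ^ i) = (\<Sum>n<Suc i. solve (\<lambda>i. f (fls_X ^ i)) M n * M n i)"
    by (simp add: algebra_simps)
qed

lemma a_diag: "eqn f a \<Longrightarrow> a i * M i i = f (fls_X ^ i) - (\<Sum>n<i. a n * M n i)"
  unfolding eqn_def by (drule spec[of _ i]) simp

lemma lnorm_a_diag: "lnorm (a i * M i i) = lnorm (a i)"
  by (simp add: lnorm_mult H3)

lemma eqn_bound:
  assumes e: "eqn f a" and B: "0 \<le> B" "\<And>i. lnorm (f (fls_X ^ i)) \<le> B"
  shows "lnorm (a i) \<le> B"
proof (induction i rule: less_induct)
  case (less i)
  have "lnorm (f (fls_X ^ i) - (\<Sum>n<i. a n * M n i)) \<le> B"
  proof (intro lnorm_diff_leI lnorm_sum_le B)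
    fix n assume "n \<in> {..<i}"
    hence "lnorm (a n) \<le> B" using less by auto
    moreover have "lnorm (a n) * lnorm (M n i) \<le> lnorm (a n)"
      using M_le1[of n i] by (simp add: mult_left_le)
    ultimately show "lnorm (a n * M n i) \<le> B" by (simp add: lnorm_mult)
  qed
  thus ?case using a_diag[OF e, of i] lnorm_a_diag[of a i] by simp
qed

end

lemma inv_pow_mono: "k \<le> m \<Longrightarrow> 1 / real CARD('a::{field,finite}) ^ m \<le> 1 / real CARD('a) ^ k"
proof -
  assume "k \<le> m"
  hence "real CARD('a) ^ k \<le> real CARD('a) ^ m" using q_gt1[where 'a='a] by (intro power_increasing) auto
  moreover have "0 < real CARD('a) ^ k" using q_gt1[where 'a='a] by simp
  ultimately show ?thesis by (intro divide_left_mono) auto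
qed

lemma inv_pow_le1: "1 / real CARD('a::{field,finite}) ^ k \<le> 1"
  using inv_pow_mono[where 'a='a, of 0 k] by simp

lemma inv_pow_pos: "0 < 1 / real CARD('a::{field,finite}) ^ k"
  using q_gt1[where 'a='a] by simp

context tri
begin

lemma eqn_null:
  assumes e: "eqn f a" and b: "(\<lambda>i. lnorm (f (fls_X ^ i))) \<longlonglongrightarrow> 0"
  shows "(\<lambda>i. lnorm (a i)) \<longlonglongrightarrow> 0"
proof -
  define B where "B = (SUP i. lnorm (f (fls_X ^ i)))"
  have bdd: "bdd_above (range (\<lambda>i. lnorm (f (fls_X ^ i))))" by (rule null_bdd[OF b])
  have Bb: "lnorm (f (fls_X ^ i)) \<le> B" for i unfolding B_def by (rule cSUP_upper[OF _ bdd]) auto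
  have B0: "0 \<le> B" using Bb[of 0] lnorm_nonneg[of "f (fls_X ^ 0)"] by linarith
  have aB: "lnorm (a i) \<le> B" for i by (rule eqn_bound[OF e B0 Bb])
  let ?q = "real CARD('a)"
  show ?thesis
  proof (rule LIMSEQ_I)
    fix r :: real assume r: "r > 0"
    define e0 where "e0 = r / 2"
    have e0: "e0 > 0" using r by (simp add: e0_def)
    obtain N where N: "\<And>i. i \<ge> N \<Longrightarrow> lnorm (f (fls_X ^ i)) < e0"
      using LIMSEQ_D[OF b e0] by auto
    have claim: "i \<ge> N \<Longrightarrow> lnorm (a i) \<le> max e0 (B * (1 / ?q ^ (i + 1 - N)))" for i
    proof (induction i rule: less_induct)
      case (less i)
      let ?C = "max e0 (B * (1 / ?q ^ (i + 1 - N)))"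
      have C0: "0 \<le> ?C" using e0 by simp
      have "lnorm (f (fls_X ^ i) - (\<Sum>n<i. a n * M n i)) \<le> ?C"
      proof (intro lnorm_diff_leI lnorm_sum_le C0)
        show "lnorm (f (fls_X ^ i)) \<le> ?C" using N[OF less.prems] by simp
      next
        fix n assume n: "n \<in> {..<i}"
        have Mb: "lnorm (M n i) \<le> 1 / ?q ^ (i - n)" by (rule H4)
        show "lnorm (a n * M n i) \<le> ?C"
        proof (cases "n < N")
          case True
          have "lnorm (a n * M n i) = lnorm (a n) * lnorm (M n i)" by (simp add: lnorm_mult)
          also have "\<dots> \<le> B * (1 / ?q ^ (i - n))"
            using aB[of n] Mb B0 by (intro mult_mono) auto
          also have "\<dots> \<le> B * (1 / ?q ^ (i + 1 - N))"
            using True B0 by (intro mult_left_mono inv_pow_mono) auto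
          also have "\<dots> \<le> ?C" by simp
          finally show ?thesis .
        next
          case False
          hence nN: "N \<le> n" "n < i" using n by auto
          have IH: "lnorm (a n) \<le> e0 \<or> lnorm (a n) \<le> B * (1 / ?q ^ (n + 1 - N))"
            using less.IH[OF nN(2) nN(1)] by (simp add: le_max_iff_disj)
          have "lnorm (a n * M n i) = lnorm (a n) * lnorm (M n i)" by (simp add: lnorm_mult)
          also have "\<dots> \<le> ?C"
            using IH
          proof
            assume h: "lnorm (a n) \<le> e0"
            have "lnorm (a n) * lnorm (M n i) \<le> e0 * 1"
              using h M_le1[of n i] e0 by (intro mult_mono) auto
            thus ?thesis by simp
          next
            assume h: "lnorm (a n) \<le> B * (1 / ?q ^ (n + 1 - N))"
            have "lnorm (a n) * lnorm (M n i) \<le> (B * (1 / ?q ^ (n + 1 - N))) * (1 / ?q ^ (i - n))"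
              using h Mb B0 by (intro mult_mono) auto
            also have "\<dots> = B * (1 / ?q ^ ((n + 1 - N) + (i - n)))"
              by (simp add: power_add)
            also have "(n + 1 - N) + (i - n) = i + 1 - N" using nN by simp
            finally show ?thesis by simp
          qed
          finally show ?thesis .
        qed
      qed
      thus ?case using a_diag[OF e, of i] lnorm_a_diag[of a i] by simp
    qed
    have "r / (B + 1) > 0" using r B0 by simp
    then obtain M0 where M0: "\<forall>k\<ge>M0. 1 / ?q ^ k < r / (B + 1)" using pow_small by blast
    show "\<exists>no. \<forall>n\<ge>no. norm (lnorm (a n) - 0) < r"
    proof (intro exI[of _ "N + M0"] allI impI)
      fix i assume i: "N + M0 \<le> i"
      have "1 / ?q ^ (i + 1 - N) < r / (B + 1)" using M0 i by auto
      hence "(B + 1) * (1 / ?q ^ (i + 1 - N)) < r" using B0 by (simp add: field_simps)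
      moreover have "B * (1 / ?q ^ (i + 1 - N)) \<le> (B + 1) * (1 / ?q ^ (i + 1 - N))"
        using inv_pow_pos[where 'a='a, of "i + 1 - N"] by (intro mult_right_mono) auto
      ultimately have "B * (1 / ?q ^ (i + 1 - N)) < r" by linarith
      moreover have "e0 < r" using r by (simp add: e0_def)
      ultimately have m: "max e0 (B * (1 / ?q ^ (i + 1 - N))) < r" by simp
      have c: "lnorm (a i) \<le> max e0 (B * (1 / ?q ^ (i + 1 - N)))" using claim[of i] i by auto
      have "lnorm (a i) < r" using c m by linarith
      thus "norm (lnorm (a i) - 0) < r" by simp
    qed
  qed
qed

lemma eqn_represents:
  assumes f: "f \<in> LC" and e: "eqn f a" and an: "(\<lambda>n. lnorm (a n)) \<longlonglongrightarrow> 0"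
  shows "represents a h f"
  unfolding represents_def
proof (rule LIMSEQ_I)
  fix r :: real assume r: "r > 0"
  have r2: "r / 2 > 0" using r by simp
  obtain N0 where N0: "\<And>n. n \<ge> N0 \<Longrightarrow> lnorm (a n) < r / 2"
    using LIMSEQ_D[OF an r2] by auto
  show "\<exists>no. \<forall>N\<ge>no. norm (supnorm (\<lambda>t. f t - (\<Sum>n<N. a n * h n t)) - 0) < r"
  proof (intro exI[of _ N0] allI impI)
    fix N assume N: "N0 \<le> N"
    have "supnorm (\<lambda>t. f t - (\<Sum>n<N. a n * h n t)) \<le> r / 2"
    proof (rule LC_supnorm_le[OF gN_LC[OF f]])
      fix i
      show "lnorm (f (fls_X ^ i) - (\<Sum>n<N. a n * M n i)) \<le> r / 2"
      proof (cases "i < N")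
        case True
        hence "(\<Sum>n<N. a n * M n i) = (\<Sum>n<Suc i. a n * M n i)" by (intro tri_sum) auto
        also have "\<dots> = f (fls_X ^ i)" using e by (simp add: eqn_def)
        finally show ?thesis using r by simp
      next
        case False
        have "f (fls_X ^ i) = (\<Sum>n<Suc i. a n * M n i)" using e by (simp add: eqn_def)
        also have "\<dots> = (\<Sum>n<N. a n * M n i) + (\<Sum>n=N..<Suc i. a n * M n i)"
          using False by (simp add: lessThan_atLeast0 sum.atLeastLessThan_concat)
        finally have "f (fls_X ^ i) - (\<Sum>n<N. a n * M n i) = (\<Sum>n=N..<Suc i. a n * M n i)" by simp
        also have "lnorm \<dots> \<le> r / 2"
        proof (intro lnorm_sum_le)
          fix n assume "n \<in> {N..<Suc i}"
          hence "lnorm (a n) < r / 2" using N N0 by auto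
          moreover have "lnorm (a n) * lnorm (M n i) \<le> lnorm (a n)"
            using M_le1[of n i] by (simp add: mult_left_le)
          ultimately show "lnorm (a n * M n i) \<le> r / 2" by (simp add: lnorm_mult)
        qed (use r in simp)
        finally show ?thesis .
      qed
    qed
    moreover have "0 \<le> supnorm (\<lambda>t. f t - (\<Sum>n<N. a n * h n t))"
      by (rule LC_supnorm_nonneg[OF gN_LC[OF f]])
    ultimately show "norm (supnorm (\<lambda>t. f t - (\<Sum>n<N. a n * h n t)) - 0) < r" using r by simp
  qed
qed

lemma eqn_norm:
  assumes f: "f \<in> LC" and e: "eqn f a" and an: "(\<lambda>n. lnorm (a n)) \<longlonglongrightarrow> 0"
  shows "supnorm f = (SUP n. lnorm (a n))"
proof -
  have bdda: "bdd_above (range (\<lambda>n. lnorm (a n)))" by (rule null_bdd[OF an])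
  have bddb: "bdd_above (range (\<lambda>i. lnorm (f (fls_X ^ i))))" by (rule null_bdd[OF LC_null[OF f]])
  define A where "A = (SUP n. lnorm (a n))"
  define B where "B = (SUP i. lnorm (f (fls_X ^ i)))"
  have Aa: "lnorm (a n) \<le> A" for n unfolding A_def by (rule cSUP_upper[OF _ bdda]) auto
  have Bb: "lnorm (f (fls_X ^ i)) \<le> B" for i unfolding B_def by (rule cSUP_upper[OF _ bddb]) auto
  have A0: "0 \<le> A" using Aa[of 0] lnorm_nonneg[of "a 0"] by linarith
  have B0: "0 \<le> B" using Bb[of 0] lnorm_nonneg[of "f (fls_X ^ 0)"] by linarith
  have "B \<le> A" unfolding B_def
  proof (rule cSUP_least)
    fix i
    have "lnorm (\<Sum>n<Suc i. a n * M n i) \<le> A"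
    proof (intro lnorm_sum_le A0)
      fix n
      have "lnorm (a n) * lnorm (M n i) \<le> lnorm (a n)"
        using M_le1[of n i] by (simp add: mult_left_le)
      thus "lnorm (a n * M n i) \<le> A" using Aa[of n] by (simp add: lnorm_mult)
    qed
    thus "lnorm (f (fls_X ^ i)) \<le> A" using e by (simp add: eqn_def)
  qed simp
  moreover have "A \<le> B" unfolding A_def
    by (rule cSUP_least) (use eqn_bound[OF e B0 Bb] in auto)
  ultimately show ?thesis using LC_supnorm[OF f] by (simp add: A_def B_def)
qed

lemma ONB_f:
  fixes f :: "'a fls \<Rightarrow> 'a fls"
  assumes f: "f \<in> LC"
  shows "(\<exists>!a. (\<lambda>n. lnorm (a n)) \<longlonglongrightarrow> 0 \<and> represents a h f) \<and>
     (\<forall>a. (\<lambda>n. lnorm (a n)) \<longlonglongrightarrow> 0 \<and> represents a h f \<longrightarrow> supnorm f = (SUP n. lnorm (a n)))"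
proof
  define a0 where "a0 = solve (\<lambda>i. f (fls_X ^ i)) M"
  have e0: "eqn f a0" unfolding a0_def by (rule eqn_solve)
  have n0: "(\<lambda>n. lnorm (a0 n)) \<longlonglongrightarrow> 0" by (rule eqn_null[OF e0 LC_null[OF f]])
  show "\<exists>!a. (\<lambda>n. lnorm (a n)) \<longlonglongrightarrow> 0 \<and> represents a h f"
  proof (rule ex1I[of _ a0])
    show "(\<lambda>n. lnorm (a0 n)) \<longlonglongrightarrow> 0 \<and> represents a0 h f"
      using n0 eqn_represents[OF f e0 n0] by simp
  next
    fix a assume "(\<lambda>n. lnorm (a n)) \<longlonglongrightarrow> 0 \<and> represents a h f"
    hence "eqn f a" using represents_eqn[OF f] by blast
    thus "a = a0" using eqn_unique[OF _ e0] by blast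
  qed
next
  show "\<forall>a. (\<lambda>n. lnorm (a n)) \<longlonglongrightarrow> 0 \<and> represents a h f \<longrightarrow> supnorm f = (SUP n. lnorm (a n))"
  proof (intro allI impI)
    fix a assume a: "(\<lambda>n. lnorm (a n)) \<longlonglongrightarrow> 0 \<and> represents a h f"
    hence "eqn f a" using represents_eqn[OF f] by blast
    thus "supnorm f = (SUP n. lnorm (a n))" using eqn_norm[OF f] a by blast
  qed
qed

theorem tri_ONB: "orthonormal_basis LC h"
  unfolding orthonormal_basis_def null_seq_def using H1 ONB_f by blast

end

lemma hasse_nth:
  "fls_nth (hasse n x) k = (if k + int n < 0 then 0
       else of_nat (nat (k + int n) choose n) * fls_nth x (k + int n))"
  unfolding hasse_def by (rule nth_Abs_fls_lower_bound[where N="- int n"]) auto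

lemma hasse_add: "hasse n (x + y) = hasse n x + hasse n y"
  by (rule fls_eqI) (simp add: hasse_nth algebra_simps)

lemma hasse_diff: "hasse n (x - y) = hasse n x - hasse n y"
  by (rule fls_eqI) (simp add: hasse_nth algebra_simps)

lemma hasse_smul: "hasse n (fls_const c * x) = fls_const c * hasse n (x :: 'a::{field,finite} fls)"
  by (rule fls_eqI) (simp add: hasse_nth algebra_simps)

lemma hasse_X_pow:
  "hasse n (fls_X ^ i :: 'a::{field,finite} fls) = fls_const (of_nat (i choose n)) * fls_X ^ (i - n)"
proof (rule fls_eqI)
  fix k
  show "fls_nth (hasse n (fls_X ^ i :: 'a fls)) k = fls_nth (fls_const (of_nat (i choose n)) * fls_X ^ (i - n)) k"
  proof (cases "n \<le> i")
    case True
    thus ?thesis by (auto simp: hasse_nth)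
  next
    case False
    thus ?thesis by (auto simp: hasse_nth binomial_eq_0)
  qed
qed

lemma hasse_bound: "lnorm (hasse n (x :: 'a::{field,finite} fls)) \<le> real CARD('a) ^ n * lnorm x"
proof (cases "hasse n x = 0")
  case True thus ?thesis by simp
next
  case False
  have x: "x \<noteq> 0"
  proof
    assume "x = 0"
    hence "hasse n x = 0" by (intro fls_eqI) (simp add: hasse_nth)
    thus False using False by simp
  qed
  have "fls_subdegree x - int n \<le> fls_subdegree (hasse n x)"
    using False by (intro fls_subdegree_geI) (auto simp: hasse_nth)
  hence "lnorm (hasse n x) \<le> real CARD('a) powr (- (fls_subdegree x - int n))"
    using lnorm_le_pow_iff[of "hasse n x" "fls_subdegree x - int n"] by simp
  also have "\<dots> = real CARD('a) ^ n * lnorm x"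
  proof -
    have "real CARD('a) powr (- real_of_int (fls_subdegree x - int n))
        = real CARD('a) powr (real n) * real CARD('a) powr (- real_of_int (fls_subdegree x))"
      by (simp add: powr_add[symmetric])
    thus ?thesis using x q_gt1[where 'a='a] by (simp add: lnorm_def powr_realpow)
  qed
  finally show ?thesis .
qed

lemma hasse_LC: "hasse n \<in> (LC :: ('a::{field,finite} fls \<Rightarrow> 'a fls) set)"
proof -
  have "cont_on_O (hasse n :: 'a fls \<Rightarrow> 'a fls)" unfolding cont_on_O_def
  proof (intro ballI allI impI)
    fix t :: "'a fls" and e :: real assume t: "t \<in> Oset" and e: "e > 0"
    let ?Q = "real CARD('a) ^ n"
    have Q: "?Q > 0" using q_gt1[where 'a='a] by simp
    show "\<exists>d>0. \<forall>s\<in>Oset. lnorm (s - t) < d \<longrightarrow> lnorm (hasse n s - hasse n t) < e"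
    proof (intro exI[of _ "e / ?Q"] conjI ballI impI)
      show "e / ?Q > 0" using e Q by simp
      fix s :: "'a fls" assume "lnorm (s - t) < e / ?Q"
      hence "?Q * lnorm (s - t) < e" using Q by (simp add: field_simps)
      thus "lnorm (hasse n s - hasse n t) < e"
        using hasse_bound[of n "s - t"] by (simp add: hasse_diff)
    qed
  qed
  moreover have "Fq_linear_on_O (hasse n :: 'a fls \<Rightarrow> 'a fls)"
    by (simp add: Fq_linear_on_O_def hasse_add hasse_smul)
  ultimately show ?thesis by (simp add: LC_def)
qed

interpretation hasse_tri: tri "hasse :: nat \<Rightarrow> 'a::{field,finite} fls \<Rightarrow> 'a fls"
proof
  show "hasse n \<in> (LC :: ('a fls \<Rightarrow> 'a fls) set)" for n by (rule hasse_LC)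
  show "i < n \<Longrightarrow> hasse n (fls_X ^ i :: 'a fls) = 0" for n i by (simp add: hasse_X_pow binomial_eq_0)
  show "lnorm (hasse n (fls_X ^ n :: 'a fls)) = 1" for n by (simp add: hasse_X_pow)
  show "lnorm (hasse n (fls_X ^ i :: 'a fls)) \<le> 1 / real CARD('a) ^ (i - n)" for n i
    by (simp add: hasse_X_pow lnorm_mult lnorm_X_pow lnorm_const)
qed

lemma hasse_ONB: "orthonormal_basis (LC :: ('a::{field,finite} fls \<Rightarrow> 'a fls) set) hasse"
  by (rule hasse_tri.tri_ONB)

lemma ff_power_card: "(x :: 'a::{field,finite}) ^ CARD('a) = x"
proof (cases "x = 0")
  case False
  have "x * (\<Prod>y\<in>UNIV-{0}. x * y) = x * x ^ (card (UNIV :: 'a set) - 1) * \<Prod>(UNIV-{0})"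
    by (simp add: prod.distrib mult_ac)
  also have "x * x ^ (card (UNIV :: 'a set) - 1) = x ^ Suc (card (UNIV :: 'a set) - 1)"
    by (subst power_Suc) auto
  also have "Suc (card (UNIV :: 'a set) - 1) = card (UNIV :: 'a set)"
    using finite_UNIV_card_ge_0[where ?'a = 'a] by simp
  also have "(\<Prod>y\<in>UNIV-{0}. x * y) = (\<Prod>y\<in>UNIV-{0}. y)"
    by (rule prod.reindex_bij_witness[of _ "\<lambda>y. y / x" "\<lambda>y. x * y"]) (use False in auto)
  finally show ?thesis
    by simp
qed (use finite_UNIV_card_ge_0[where ?'a = 'a] in auto)

lemma choose_card_zero:
  assumes k: "0 < k" "k < CARD('a::{field,finite})"
  shows "(of_nat (CARD('a) choose k) :: 'a) = 0"
proof -
  let ?q = "CARD('a)"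
  define P :: "'a poly" where "P = (\<Sum>j\<in>{1..<?q}. monom (of_nat (?q choose j)) j)"
  have ev: "poly P x = 0" for x
  proof -
    have "(x + 1) ^ ?q = (\<Sum>j\<le>?q. of_nat (?q choose j) * x ^ j * 1 ^ (?q - j))"
      by (rule binomial_ring)
    also have "{..?q} = insert 0 (insert ?q {1..<?q})" by auto
    also have "(\<Sum>j\<in>insert 0 (insert ?q {1..<?q}). of_nat (?q choose j) * x ^ j * 1 ^ (?q - j))
        = 1 + (x ^ ?q + (\<Sum>j\<in>{1..<?q}. of_nat (?q choose j) * x ^ j))"
      using card_ge2[where 'a='a] by (simp add: sum.insert)
    finally have "(x + 1) ^ ?q = 1 + (x ^ ?q + poly P x)"
      by (simp add: P_def poly_sum poly_monom)
    thus ?thesis using ff_power_card[of x] ff_power_card[of "x + 1"] by simp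
  qed
  have degP: "degree P < ?q"
  proof -
    have "degree P \<le> ?q - 1" unfolding P_def
      by (intro degree_sum_le) (auto simp: degree_monom_le intro: order.trans[OF degree_monom_le])
    thus ?thesis using card_ge2[where 'a='a] by linarith
  qed
  have "P = 0"
    by (rule poly_eqI_degree[of UNIV]) (use ev degP in auto)
  hence "coeff P k = 0" by simp
  moreover have "coeff P k = of_nat (?q choose k)"
    unfolding P_def coeff_sum using k by (simp add: coeff_monom)
  ultimately show ?thesis by simp
qed

lemma frob_add: "((x :: 'a::{field,finite} fls) + y) ^ CARD('a) = x ^ CARD('a) + y ^ CARD('a)"
proof -
  let ?q = "CARD('a)"
  have z: "(of_nat (?q choose k) :: 'a fls) = 0" if "0 < k" "k < ?q" for k
    using choose_card_zero[OF that] by (simp add: fls_of_nat)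
  have "(x + y) ^ ?q = (\<Sum>j\<le>?q. of_nat (?q choose j) * x ^ j * y ^ (?q - j))"
    by (rule binomial_ring)
  also have "{..?q} = insert 0 (insert ?q {1..<?q})" by auto
  also have "(\<Sum>j\<in>insert 0 (insert ?q {1..<?q}). of_nat (?q choose j) * x ^ j * y ^ (?q - j))
      = y ^ ?q + (x ^ ?q + (\<Sum>j\<in>{1..<?q}. of_nat (?q choose j) * x ^ j * y ^ (?q - j)))"
    using card_ge2[where 'a='a] by (simp add: sum.insert)
  also have "(\<Sum>j\<in>{1..<?q}. of_nat (?q choose j) * x ^ j * y ^ (?q - j)) = 0"
    by (intro sum.neutral) (auto simp: z)
  finally show ?thesis by simp
qed

lemma frob_const: "(fls_const c * (x :: 'a::{field,finite} fls)) ^ CARD('a) = fls_const c * x ^ CARD('a)"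
  by (simp add: power_mult_distrib fls_const_power[symmetric] ff_power_card)

lemma frob_diff: "((x :: 'a::{field,finite} fls) - y) ^ CARD('a) = x ^ CARD('a) - y ^ CARD('a)"
proof -
  have "x ^ CARD('a) = ((x - y) + y) ^ CARD('a)" by simp
  also have "\<dots> = (x - y) ^ CARD('a) + y ^ CARD('a)" by (rule frob_add)
  finally show ?thesis by simp
qed

lemma prod_linear_fls: "(\<Prod>c\<in>(UNIV::'a::{field,finite} set). Y - fls_const c) = Y ^ CARD('a) - Y"
proof -
  let ?q = "CARD('a)"
  define P :: "'a fls poly" where "P = (\<Prod>c\<in>(UNIV::'a set). [:- fls_const c, 1:])"
  define Q :: "'a fls poly" where "Q = monom 1 ?q - [:0, 1:]"
  have q2: "?q \<ge> 2" by (rule card_ge2)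
  have degP: "degree P = ?q" unfolding P_def
    by (subst degree_prod_eq_sum_degree) auto
  have lcP: "coeff P ?q = 1"
    using lead_coeff_prod[of "\<lambda>c. [:- fls_const c, 1:]" "UNIV :: 'a set"] degP by (simp add: P_def)
  have "coeff [:0::'a fls, 1:] ?q = 0" by (rule coeff_eq_0) (use q2 in simp)
  hence coeffQ: "coeff Q ?q = 1" by (simp add: Q_def coeff_monom)
  have degQ: "degree Q \<le> ?q" unfolding Q_def
    using q2 by (intro degree_diff_le) (auto simp: degree_monom_le)
  have card: "card (range (fls_const :: 'a \<Rightarrow> 'a fls)) = ?q"
    by (rule card_image) (auto simp: inj_on_def, metis fls_minus_const fls_const_eq_0_iff right_minus_eq)
  have "P = Q"
  proof (rule poly_eqI_degree_lead_coeff[of P ?q Q "range fls_const"])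
    show "coeff P ?q = coeff Q ?q" using lcP coeffQ by simp
    show "?q \<le> card (range (fls_const :: 'a \<Rightarrow> 'a fls))" using card by simp
    show "degree P \<le> ?q" using degP by simp
    show "degree Q \<le> ?q" by (rule degQ)
    fix z assume "z \<in> range (fls_const :: 'a \<Rightarrow> 'a fls)"
    then obtain d where d: "z = fls_const d" by blast
    have "poly P z = (\<Prod>c\<in>UNIV. fls_const d - fls_const c)" by (simp add: P_def poly_prod d)
    also have "\<dots> = 0" by (rule prod_zero) auto
    also have "0 = poly Q z"
      by (simp add: Q_def poly_monom d fls_const_power[symmetric] ff_power_card)
    finally show "poly P z = poly Q z" .
  qed
  hence "poly P Y = poly Q Y" by simp
  thus ?thesis by (simp add: P_def Q_def poly_prod poly_monom)
qed

lemma prod_linear2: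
  "(\<Prod>c\<in>(UNIV::'a::{field,finite} set). A - fls_const c * B) = A ^ CARD('a) - B ^ (CARD('a) - 1) * A"
proof (cases "B = 0")
  case True
  have "CARD('a) - 1 \<noteq> 0" using card_ge2[where 'a='a] by simp
  thus ?thesis using True by simp
next
  case False
  let ?q = "CARD('a)"
  have "(\<Prod>c\<in>(UNIV::'a set). A - fls_const c * B) = (\<Prod>c\<in>(UNIV::'a set). B * (A / B - fls_const c))"
    using False by (intro prod.cong) (auto simp: field_simps)
  also have "\<dots> = B ^ ?q * (\<Prod>c\<in>(UNIV::'a set). A / B - fls_const c)"
    by (simp add: prod.distrib)
  also have "\<dots> = B ^ ?q * ((A / B) ^ ?q - A / B)" by (simp add: prod_linear_fls)
  also have "B ^ ?q = B ^ (?q - 1) * B"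
    using card_ge2[where 'a='a] by (metis Suc_diff_1 less_le_trans pos2 power_Suc2)
  also have "B ^ (?q - 1) * B * ((A / B) ^ ?q - A / B) = (B ^ (?q - 1) * B) * (A / B) ^ ?q - B ^ (?q - 1) * A"
    using False by (simp add: field_simps)
  also have "(B ^ (?q - 1) * B) * (A / B) ^ ?q = A ^ ?q"
  proof -
    have "B ^ (?q - 1) * B = B ^ ?q"
      using card_ge2[where 'a='a] by (metis Suc_diff_1 less_le_trans pos2 power_Suc2)
    thus ?thesis using False by (simp add: power_divide)
  qed
  finally show ?thesis .
qed

lemma pf_add: "poly_to_fls (p + q) = poly_to_fls p + poly_to_fls (q :: 'a::{field,finite} poly)"
  by (simp add: poly_to_fls_def fps_of_poly_add)

lemma pf_monom: "poly_to_fls (monom c n) = fls_const (c::'a::{field,finite}) * fls_X ^ n"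
  by (simp add: poly_to_fls_def fps_of_poly_monom fls_times_fps_to_fls fps_to_fls_power)

lemma pf_const: "poly_to_fls [:c:] = fls_const (c::'a::{field,finite})"
  by (simp add: poly_to_fls_def fps_of_poly_const)

lemma pf_Oset: "poly_to_fls (p :: 'a::{field,finite} poly) \<in> Oset"
  by (simp add: poly_to_fls_def Oset_def fls_subdegree_fls_to_fps_gt0)

lemma pf_zero [simp]: "poly_to_fls (0 :: 'a::{field,finite} poly) = 0"
  by (simp add: poly_to_fls_def)

lemma PS_1: "{m::'a::{field,finite} poly. degree m < 1} = range (\<lambda>c. [:c:])"
proof (intro set_eqI iffI)
  fix m :: "'a poly" assume "m \<in> {m. degree m < 1}"
  hence "degree m = 0" by simp
  hence "m = [:coeff m 0:]" by (rule degree_0_id[symmetric])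
  thus "m \<in> range (\<lambda>c. [:c:])" by blast
qed auto

lemma PS_Suc:
  assumes n: "n \<ge> 1"
  shows "{m::'a::{field,finite} poly. degree m < Suc n} = (\<lambda>(m,c). m + monom c n) ` ({m. degree m < n} \<times> UNIV)"
proof (intro set_eqI iffI)
  fix p :: "'a poly" assume p: "p \<in> {m. degree m < Suc n}"
  define m where "m = p - monom (coeff p n) n"
  have "degree m < n"
  proof (rule degree_lessI)
    show "m \<noteq> 0 \<or> 0 < n" using n by simp
    show "\<forall>k\<ge>n. coeff m k = 0"
    proof (intro allI impI)
      fix k assume k: "n \<le> k"
      show "coeff m k = 0"
      proof (cases "k = n")
        case True thus ?thesis by (simp add: m_def)
      next
        case False
        hence "degree p < k" using p k by simp
        thus ?thesis using False by (simp add: m_def coeff_eq_0 coeff_monom)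
      qed
    qed
  qed
  moreover have "p = m + monom (coeff p n) n" by (simp add: m_def)
  ultimately show "p \<in> (\<lambda>(m,c). m + monom c n) ` ({m. degree m < n} \<times> UNIV)"
    by (intro image_eqI[of _ _ "(m, coeff p n)"]) auto
next
  fix p :: "'a poly" assume "p \<in> (\<lambda>(m,c). m + monom c n) ` ({m. degree m < n} \<times> UNIV)"
  then obtain m c where mc: "p = m + monom c n" "degree m < n" by auto
  have "degree p \<le> max (degree m) (degree (monom c n))" unfolding mc by (rule degree_add_le_max)
  also have "\<dots> \<le> n" using mc by (simp add: degree_monom_le)
  finally show "p \<in> {m. degree m < Suc n}" by simp
qed

lemma PS_inj: "inj_on (\<lambda>(m,c). m + monom c n) ({m::'a::{field,finite} poly. degree m < n} \<times> UNIV)"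
proof (rule inj_onI, clarify)
  fix m c m' c' assume m: "degree (m::'a poly) < n" and m': "degree (m'::'a poly) < n"
    and eq: "m + monom c n = m' + monom c' n"
  have "coeff (m + monom c n) n = coeff (m' + monom c' n) n" using eq by simp
  hence "c = c'" using m m' by (simp add: coeff_eq_0 coeff_monom)
  thus "m = m' \<and> c = c'" using eq by simp
qed

lemma finite_PS: "finite {m::'a::{field,finite} poly. degree m < n}"
proof (induction n)
  case 0 thus ?case by simp
next
  case (Suc n)
  show ?case
  proof (cases "n = 0")
    case True
    have "{m::'a poly. degree m < Suc n} = range (\<lambda>c. [:c:])" using PS_1 True by simp
    thus ?thesis by simp
  next
    case False
    hence e: "{m::'a poly. degree m < Suc n} = (\<lambda>(m,c). m + monom c n) ` ({m. degree m < n} \<times> UNIV)"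
      by (intro PS_Suc) simp
    show ?thesis unfolding e using Suc.IH by (intro finite_imageI finite_cartesian_product) auto
  qed
qed

lemma zero_in_PS: "n \<ge> 1 \<Longrightarrow> (0::'a::{field,finite} poly) \<in> {m. degree m < n}"
  by simp

lemma car_e_Suc:
  assumes n: "n \<ge> 1"
  shows "car_e (Suc n) x = (\<Prod>c\<in>(UNIV::'a::{field,finite} set). car_e n (x - fls_const c * fls_X ^ n))"
proof -
  have "car_e (Suc n) x = (\<Prod>m\<in>(\<lambda>(m,c). m + monom c n) ` ({m::'a poly. degree m < n} \<times> UNIV). x - poly_to_fls m)"
    unfolding car_e_def PS_Suc[OF n] ..
  also have "\<dots> = (\<Prod>p\<in>{m::'a poly. degree m < n} \<times> UNIV. x - poly_to_fls ((\<lambda>(m,c). m + monom c n) p))"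
    by (rule prod.reindex[OF PS_inj, unfolded comp_def])
  also have "\<dots> = (\<Prod>(m,c)\<in>{m::'a poly. degree m < n} \<times> UNIV. (x - fls_const c * fls_X ^ n) - poly_to_fls m)"
    by (intro prod.cong) (auto simp: pf_add pf_monom)
  also have "\<dots> = (\<Prod>m\<in>{m::'a poly. degree m < n}. \<Prod>c\<in>UNIV. (x - fls_const c * fls_X ^ n) - poly_to_fls m)"
    by (rule prod.cartesian_product[symmetric])
  also have "\<dots> = (\<Prod>c\<in>UNIV. \<Prod>m\<in>{m::'a poly. degree m < n}. (x - fls_const c * fls_X ^ n) - poly_to_fls m)"
    by (rule prod.swap)
  also have "\<dots> = (\<Prod>c\<in>(UNIV::'a set). car_e n (x - fls_const c * fls_X ^ n))"
    by (simp add: car_e_def)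
  finally show ?thesis .
qed

lemma car_e_1: "car_e 1 x = x ^ CARD('a) - (x :: 'a::{field,finite} fls)"
proof -
  have "car_e 1 x = (\<Prod>m\<in>range (\<lambda>c. [:c:]). x - poly_to_fls (m :: 'a poly))"
    unfolding car_e_def PS_1 ..
  also have "\<dots> = (\<Prod>c\<in>(UNIV::'a set). x - fls_const c)"
    by (subst prod.reindex) (auto simp: inj_on_def pf_const)
  also have "\<dots> = x ^ CARD('a) - x" by (rule prod_linear_fls)
  finally show ?thesis .
qed

lemma fls_const_pow_card [simp]: "fls_const (c::'a::{field,finite}) ^ CARD('a) = fls_const c"
  by (simp add: fls_const_power[symmetric] ff_power_card)

definition flin :: "('a::{field,finite} fls \<Rightarrow> 'a fls) \<Rightarrow> bool" where
  "flin e \<longleftrightarrow> (\<forall>x y. e (x + y) = e x + e y) \<and> (\<forall>c x. e (fls_const c * x) = fls_const c * e x)"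

lemma flin_diff: "flin e \<Longrightarrow> e (x - y) = e x - e y"
proof -
  assume "flin e"
  hence "e ((x - y) + y) = e (x - y) + e y" unfolding flin_def by blast
  thus ?thesis by (simp add: eq_diff_eq)
qed

lemma car_e_rec:
  fixes x :: "'a::{field,finite} fls"
  assumes n: "n \<ge> 1" and l: "flin (car_e n :: 'a fls \<Rightarrow> 'a fls)"
  shows "car_e (Suc n) x = car_e n x ^ CARD('a) - car_e n (fls_X ^ n) ^ (CARD('a) - 1) * car_e n x"
proof -
  have "car_e (Suc n) x = (\<Prod>c\<in>(UNIV::'a set). car_e n x - fls_const c * car_e n (fls_X ^ n))"
    unfolding car_e_Suc[OF n] using l by (simp add: flin_diff flin_def)
  also have "\<dots> = car_e n x ^ CARD('a) - car_e n (fls_X ^ n) ^ (CARD('a) - 1) * car_e n x"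
    by (rule prod_linear2)
  finally show ?thesis .
qed

lemma car_e_lin: "n \<ge> 1 \<Longrightarrow> flin (car_e n :: 'a::{field,finite} fls \<Rightarrow> 'a fls)"
proof (induction n rule: nat_induct_at_least)
  case base
  show ?case unfolding flin_def car_e_1
    by (simp add: frob_add frob_const algebra_simps)
next
  case (Suc n)
  let ?K = "car_e n (fls_X ^ n :: 'a fls) ^ (CARD('a) - 1)"
  have r: "car_e (Suc n) x = car_e n x ^ CARD('a) - ?K * car_e n x" for x :: "'a fls"
    by (rule car_e_rec[OF Suc.hyps Suc.IH])
  show ?case unfolding flin_def r
    using Suc.IH by (simp add: flin_def frob_add frob_const algebra_simps)
qed

lemma sub_val:
  fixes f g :: "'a::{field,finite} fls"
  assumes g: "g \<noteq> 0" and fg: "f = 0 \<or> fls_subdegree g < fls_subdegree f"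
  shows "f - g \<noteq> 0 \<and> fls_subdegree (f - g) = fls_subdegree g"
proof (cases "f = 0")
  case True thus ?thesis using g by simp
next
  case False
  hence lt: "fls_subdegree g < fls_subdegree f" using fg by simp
  have "fls_nth (f - g) (fls_subdegree g) \<noteq> 0" using lt g by simp
  hence "f - g \<noteq> 0" by (metis fls_nonzeroI)
  thus ?thesis using fls_subdegree_diff_eq2[OF g lt] by simp
qed

lemma brk_val: "j \<ge> 1 \<Longrightarrow> brk j \<noteq> (0::'a::{field,finite} fls) \<and> fls_subdegree (brk j :: 'a fls) = 1"
proof -
  assume j: "j \<ge> 1"
  have "1 < CARD('a) ^ j" using card_ge2[where 'a='a] j by (intro one_less_power) auto
  hence h: "(1::int) < int CARD('a) ^ j" by (metis of_nat_1 of_nat_less_iff of_nat_power)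
  hence "fls_subdegree (fls_X :: 'a fls) < fls_subdegree (fls_X ^ (CARD('a) ^ j) :: 'a fls)" by (simp add: h)
  thus ?thesis using sub_val[of "fls_X :: 'a fls" "fls_X ^ (CARD('a) ^ j)"] by (simp add: brk_def)
qed

lemma carF_0: "carF 0 = (1::'a::{field,finite} fls)"
  by (simp add: carF_def)

lemma carF_Suc: "carF (Suc n) = brk (Suc n) * (carF n :: 'a::{field,finite} fls) ^ CARD('a)"
proof -
  have "carF (Suc n) = (\<Prod>i\<in>insert (Suc n) {1..n}. brk i ^ (CARD('a) ^ (Suc n - i)) :: 'a fls)"
    unfolding carF_def by (simp add: atLeastAtMostSuc_conv)
  also have "\<dots> = brk (Suc n) * (\<Prod>i\<in>{1..n}. brk i ^ (CARD('a) ^ (Suc n - i)))"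
    by (subst prod.insert) auto
  also have "(\<Prod>i\<in>{1..n}. brk i ^ (CARD('a) ^ (Suc n - i)) :: 'a fls) = (\<Prod>i\<in>{1..n}. (brk i ^ (CARD('a) ^ (n - i))) ^ CARD('a))"
    by (intro prod.cong refl) (simp add: Suc_diff_le power_mult[symmetric] mult.commute)
  also have "\<dots> = (carF n) ^ CARD('a)"
    by (simp add: carF_def prod_power_distrib)
  finally show ?thesis .
qed

lemma carF_val: "carF n \<noteq> (0::'a::{field,finite} fls) \<and>
    (n \<ge> 1 \<longrightarrow> fls_subdegree (carF (Suc n) :: 'a fls) = 1 + int CARD('a) * fls_subdegree (carF n :: 'a fls))"
proof (induction n)
  case 0
  have "carF (Suc 0) = (brk 1 :: 'a fls)" by (simp add: carF_Suc carF_0)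
  thus ?case by (simp add: carF_0)
next
  case (Suc n)
  have nz: "carF (Suc n) \<noteq> (0 :: 'a fls)"
    using Suc.IH brk_val[of "Suc n", where 'a='a] by (simp add: carF_Suc)
  have "fls_subdegree (carF (Suc (Suc n)) :: 'a fls) = 1 + int CARD('a) * fls_subdegree (carF (Suc n) :: 'a fls)"
    using nz brk_val[of "Suc (Suc n)", where 'a='a] by (simp add: carF_Suc fls_subdegree_pow)
  thus ?case using nz by simp
qed

lemma carF_nz: "carF n \<noteq> (0::'a::{field,finite} fls)"
  using carF_val by blast

lemma carF_1_val: "fls_subdegree (carF 1 :: 'a::{field,finite} fls) = 1"
proof -
  have "carF (Suc 0) = (brk 1 :: 'a fls)" by (simp add: carF_Suc carF_0)
  thus ?thesis using brk_val[of 1, where 'a='a] by simp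
qed

lemma car_e_val:
  assumes n: "n \<ge> 1"
  shows "\<forall>i\<ge>n. car_e n (fls_X ^ i) \<noteq> (0::'a::{field,finite} fls) \<and>
      fls_subdegree (car_e n (fls_X ^ i) :: 'a fls) = fls_subdegree (carF n :: 'a fls) + int i - int n"
  using n
proof (induction n rule: nat_induct_at_least)
  case base
  show ?case
  proof (intro allI impI)
    fix i :: nat assume i: "1 \<le> i"
    have "i < i * CARD('a)" using i card_ge2[where 'a='a] by simp
    hence lt: "fls_subdegree (fls_X ^ i :: 'a fls) < fls_subdegree ((fls_X ^ i) ^ CARD('a) :: 'a fls)"
      by (simp add: power_mult[symmetric])
    have "car_e 1 (fls_X ^ i) = (fls_X ^ i) ^ CARD('a) - (fls_X ^ i :: 'a fls)" by (rule car_e_1)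
    thus "car_e 1 (fls_X ^ i) \<noteq> (0::'a fls) \<and>
      fls_subdegree (car_e 1 (fls_X ^ i) :: 'a fls) = fls_subdegree (carF 1 :: 'a fls) + int i - int 1"
      using sub_val[of "fls_X ^ i :: 'a fls" "(fls_X ^ i) ^ CARD('a)"] lt carF_1_val[where 'a='a] by simp
  qed
next
  case (Suc n)
  let ?q = "CARD('a)"
  let ?F = "fls_subdegree (carF n :: 'a fls)"
  define B where "B = (car_e n (fls_X ^ n) :: 'a fls)"
  have B: "B \<noteq> 0" "fls_subdegree B = ?F" using Suc.IH[rule_format, of n] by (auto simp: B_def)
  show ?case
  proof (intro allI impI)
    fix i :: nat assume i: "Suc n \<le> i"
    define A where "A = (car_e n (fls_X ^ i) :: 'a fls)"
    have A: "A \<noteq> 0" "fls_subdegree A = ?F + int i - int n" using Suc.IH[rule_format, of i] i by (auto simp: A_def)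
    have rec: "car_e (Suc n) (fls_X ^ i) = A ^ ?q - B ^ (?q - 1) * A"
      unfolding A_def B_def by (rule car_e_rec[OF Suc.hyps car_e_lin[OF Suc.hyps]])
    have g: "B ^ (?q - 1) * A \<noteq> 0" using A B by simp
    have vg: "fls_subdegree (B ^ (?q - 1) * A) = int ?q * ?F + int i - int n"
    proof -
      have "fls_subdegree (B ^ (?q - 1) * A) = int (?q - 1) * ?F + (?F + int i - int n)"
        using A B by (simp add: fls_subdegree_pow)
      also have "int (?q - 1) = int ?q - 1" using card_ge2[where 'a='a] by simp
      finally show ?thesis by (simp add: algebra_simps)
    qed
    have vf: "fls_subdegree (A ^ ?q) = int ?q * (?F + int i - int n)"
      using A by (simp add: fls_subdegree_pow)
    have "int ?q * (?F + int i - int n) - (int ?q * ?F + int i - int n) = (int ?q - 1) * (int i - int n)"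
      by (simp add: algebra_simps)
    moreover have "(int ?q - 1) * (int i - int n) > 0" using i card_ge2[where 'a='a] by simp
    ultimately have lt: "fls_subdegree (B ^ (?q - 1) * A) < fls_subdegree (A ^ ?q)"
      using vf vg by linarith
    have sv: "A ^ ?q - B ^ (?q - 1) * A \<noteq> 0 \<and> fls_subdegree (A ^ ?q - B ^ (?q - 1) * A) = int ?q * ?F + int i - int n"
      using sub_val[OF g] lt vg by simp
    have cF: "fls_subdegree (carF (Suc n) :: 'a fls) = 1 + int ?q * ?F"
      using carF_val[of n, where 'a='a] Suc.hyps by simp
    show "car_e (Suc n) (fls_X ^ i) \<noteq> (0::'a fls) \<and>
      fls_subdegree (car_e (Suc n) (fls_X ^ i) :: 'a fls) = fls_subdegree (carF (Suc n) :: 'a fls) + int i - int (Suc n)"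
      using sv cF rec by simp
  qed
qed

lemma carlitz_val:
  assumes n: "n \<ge> 1" and i: "n \<le> i"
  shows "lnorm (carlitzE n (fls_X ^ i) :: 'a::{field,finite} fls) = 1 / real CARD('a) ^ (i - n)"
proof -
  let ?F = "fls_subdegree (carF n :: 'a fls)"
  let ?q = "real CARD('a)"
  have e: "car_e n (fls_X ^ i) \<noteq> (0::'a fls)" "fls_subdegree (car_e n (fls_X ^ i) :: 'a fls) = ?F + int i - int n"
    using car_e_val[OF n] i by auto
  have "lnorm (carlitzE n (fls_X ^ i) :: 'a fls) = lnorm (car_e n (fls_X ^ i) :: 'a fls) / lnorm (carF n :: 'a fls)"
    using n by (simp add: carlitzE_def lnorm_divide)
  also have "\<dots> = ?q powr (- real_of_int (?F + int i - int n)) / ?q powr (- real_of_int ?F)"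
    using e carF_nz[of n, where 'a='a] by (simp add: lnorm_def)
  also have "?q powr (- real_of_int (?F + int i - int n)) = ?q powr (- real_of_int ?F) * ?q powr (- real (i - n))"
  proof -
    have "- real_of_int (?F + int i - int n) = - real_of_int ?F + - real (i - n)"
      using i by (simp add: of_nat_diff)
    thus ?thesis by (simp only: powr_add)
  qed
  also have "?q powr (- real_of_int ?F) * ?q powr (- real (i - n)) / ?q powr (- real_of_int ?F) = ?q powr (- real (i - n))"
    using q_gt1[where 'a='a] by simp
  also have "\<dots> = 1 / ?q ^ (i - n)"
    using q_gt1[where 'a='a] by (simp add: powr_minus powr_realpow divide_inverse)
  finally show ?thesis .
qed

lemma carlitz_low:
  assumes n: "n \<ge> 1" and i: "i < n"
  shows "carlitzE n (fls_X ^ i) = (0::'a::{field,finite} fls)"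
proof -
  have "car_e n (fls_X ^ i) = (0::'a fls)" unfolding car_e_def
  proof (rule prod_zero)
    show "finite {m::'a poly. degree m < n}" by (rule finite_PS)
    show "\<exists>m\<in>{m::'a poly. degree m < n}. fls_X ^ i - poly_to_fls m = 0"
      using i by (intro bexI[of _ "monom 1 i"]) (auto simp: pf_monom degree_monom_eq)
  qed
  thus ?thesis using n by (simp add: carlitzE_def)
qed

lemma car_e_small:
  assumes n: "n \<ge> 1" and x: "x \<in> Oset"
  shows "lnorm (car_e n (x :: 'a::{field,finite} fls)) \<le> lnorm x"
proof -
  let ?P = "{m::'a poly. degree m < n}"
  have "car_e n x = (x - poly_to_fls 0) * (\<Prod>m\<in>?P - {0}. x - poly_to_fls m)"
    unfolding car_e_def using n finite_PS[of n, where 'a='a] by (subst prod.remove[of _ 0]) auto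
  hence "lnorm (car_e n x) = lnorm x * (\<Prod>m\<in>?P - {0}. lnorm (x - poly_to_fls m))"
    by (simp add: lnorm_mult lnorm_prod)
  also have "\<dots> \<le> lnorm x * 1"
  proof (intro mult_left_mono prod_le_1 conjI)
    fix m :: "'a poly"
    show "0 \<le> lnorm (x - poly_to_fls m)" by simp
    show "lnorm (x - poly_to_fls m) \<le> 1" using Oset_diff[OF x pf_Oset] by (simp add: Oset_iff_lnorm)
  qed simp
  finally show ?thesis by simp
qed

lemma id_LC: "(\<lambda>x. x) \<in> (LC :: ('a::{field,finite} fls \<Rightarrow> 'a fls) set)"
  unfolding LC_def cont_on_O_def Fq_linear_on_O_def by auto

lemma carlitz_LC: "carlitzE n \<in> (LC :: ('a::{field,finite} fls \<Rightarrow> 'a fls) set)"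
proof (cases "n = 0")
  case True
  hence "carlitzE n = (\<lambda>x::'a fls. x)" by (simp add: carlitzE_def fun_eq_iff)
  thus ?thesis using id_LC by simp
next
  case False
  hence n: "n \<ge> 1" by simp
  let ?F = "carF n :: 'a fls"
  have E: "carlitzE n x = car_e n x / ?F" for x :: "'a fls" using False by (simp add: carlitzE_def)
  have l: "flin (car_e n :: 'a fls \<Rightarrow> 'a fls)" by (rule car_e_lin[OF n])
  have Fpos: "lnorm ?F > 0" by (rule lnorm_pos[OF carF_nz])
  have "cont_on_O (carlitzE n :: 'a fls \<Rightarrow> 'a fls)" unfolding cont_on_O_def
  proof (intro ballI allI impI)
    fix t :: "'a fls" and e :: real assume t: "t \<in> Oset" and e: "e > 0"
    show "\<exists>d>0. \<forall>s\<in>Oset. lnorm (s - t) < d \<longrightarrow> lnorm (carlitzE n s - carlitzE n t) < e"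
    proof (intro exI[of _ "e * lnorm ?F"] conjI ballI impI)
      show "e * lnorm ?F > 0" using e Fpos by simp
      fix s :: "'a fls" assume s: "s \<in> Oset" "lnorm (s - t) < e * lnorm ?F"
      have "carlitzE n s - carlitzE n t = car_e n (s - t) / ?F"
        using l by (simp add: E flin_diff diff_divide_distrib)
      hence "lnorm (carlitzE n s - carlitzE n t) = lnorm (car_e n (s - t)) / lnorm ?F"
        by (simp add: lnorm_divide)
      also have "\<dots> \<le> lnorm (s - t) / lnorm ?F"
        using car_e_small[OF n Oset_diff[OF s(1) t]] Fpos by (simp add: divide_right_mono)
      also have "\<dots> < e" using s(2) Fpos by (simp add: field_simps)
      finally show "lnorm (carlitzE n s - carlitzE n t) < e" .
    qed
  qed
  moreover have "Fq_linear_on_O (carlitzE n :: 'a fls \<Rightarrow> 'a fls)"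
    using l by (simp add: Fq_linear_on_O_def E flin_def add_divide_distrib)
  ultimately show ?thesis by (simp add: LC_def)
qed

interpretation carlitz_tri: tri "carlitzE :: nat \<Rightarrow> 'a::{field,finite} fls \<Rightarrow> 'a fls"
proof
  show "carlitzE n \<in> (LC :: ('a fls \<Rightarrow> 'a fls) set)" for n by (rule carlitz_LC)
  show "i < n \<Longrightarrow> carlitzE n (fls_X ^ i :: 'a fls) = 0" for n i
    by (rule carlitz_low) auto
  show "lnorm (carlitzE n (fls_X ^ n :: 'a fls)) = 1" for n
  proof (cases "n = 0")
    case True thus ?thesis by (simp add: carlitzE_def)
  next
    case False thus ?thesis using carlitz_val[of n n, where 'a='a] by simp
  qed
  show "lnorm (carlitzE n (fls_X ^ i :: 'a fls)) \<le> 1 / real CARD('a) ^ (i - n)" for n i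
  proof (cases "n = 0")
    case True thus ?thesis by (simp add: carlitzE_def lnorm_X_pow)
  next
    case False
    show ?thesis
    proof (cases "n \<le> i")
      case True thus ?thesis using carlitz_val[of n i, where 'a='a] False by simp
    next
      case False2: False
      thus ?thesis using carlitz_low[of n i, where 'a='a] False by simp
    qed
  qed
qed

lemma carlitz_ONB: "orthonormal_basis (LC :: ('a::{field,finite} fls \<Rightarrow> 'a fls) set) carlitzE"
  by (rule carlitz_tri.tri_ONB)

theorem theorem5:
  shows "orthonormal_basis (LC :: ('a::{field,finite} fls \<Rightarrow> 'a fls) set) carlitzE
     \<longleftrightarrow> orthonormal_basis (LC :: ('a fls \<Rightarrow> 'a fls) set) hasse"
  using carlitz_ONB[where 'a='a] hasse_ONB[where 'a='a] by blast

end
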